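(* Let $\gamma>0$, $\beta:\mathcal S\to(0,+\infty)$ of class $\mathcal C^1$, $\bar y\in(0,1]$ and $(x_0,y_0)\in\mathcal S$ with $0<y_0\le\bar y$. Let $u\in\mathcal U^{\bar y}_{x_0,y_0}$ satisfy $J(u)=\int_0^\infty u(t)\,dt<+\infty$, and let $(x(t),y(t))$ be the corresponding solution of the controlled CBF-SIR model with initial condition $(x_0,y_0)$. Then there exists a finite time $\bar t$ such that $R(x(\bar t),y(\bar t))<1$.
   Context: $\mathcal S=\{(x,y)\in\mathbb R^2_+: x+y\le1\}$; $R(x,y)=\frac1\gamma\beta(x,y)x$. $\mathcal U$ is the set of functions $u:[0,\infty)\to[0,1]$ continuous except on a set of points without accumulation points, at each of which $u$ has finite one-sided limits and equals its right limit. Controlled CBF-SIR model: $\dot x=-(1-u(t))\gamma R(x,y)y$, $\dot y=\gamma((1-u(t))R(x,y)-1)y$, with continuous piecewise-$\mathcal C^1$ solutions in $\mathcal S$ solving the ODE outside jump times of $u$. $\mathcal U^{\bar y}_{x_0,y_0}$ is the set of $u\in\mathcal U$ whose solution from $(x_0,y_0)$ satisfies $y(t)\le\bar y$ for all $t\ge0$. *)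

theory Defs
  imports "HOL-Analysis.Analysis"
begin

definition simplexS :: "(real \<times> real) set" where
  "simplexS = {(x, y). 0 \<le> x \<and> 0 \<le> y \<and> x + y \<le> 1}"

definition Rfun :: "real \<Rightarrow> (real \<times> real \<Rightarrow> real) \<Rightarrow> real \<Rightarrow> real \<Rightarrow> real" where
  "Rfun \<gamma> \<beta> x y = (1 / \<gamma>) * \<beta> (x, y) * x"

definition C1_on_S :: "(real \<times> real \<Rightarrow> real) \<Rightarrow> bool" where
  "C1_on_S \<beta> \<longleftrightarrow> (\<exists>T D. open T \<and> simplexS \<subseteq> T \<and>
      (\<forall>p\<in>T. (\<beta> has_derivative blinfun_apply (D p)) (at p)) \<and> continuous_on T D)"

definition admissible :: "(real \<Rightarrow> real) \<Rightarrow> bool" where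
  "admissible u \<longleftrightarrow> (\<forall>t\<ge>0. 0 \<le> u t \<and> u t \<le> 1) \<and>
     (\<exists>D. D \<subseteq> {0..} \<and> (\<forall>T. finite (D \<inter> {0..T})) \<and>
        (\<forall>t\<in>{0..} - D. continuous (at t within {0..}) u) \<and>
        (\<forall>t\<in>D. (u \<longlongrightarrow> u t) (at_right t) \<and> (0 < t \<longrightarrow> (\<exists>l. (u \<longlongrightarrow> l) (at_left t)))))"

definition jump_times :: "(real \<Rightarrow> real) \<Rightarrow> real set" where
  "jump_times u = {t. 0 \<le> t \<and> \<not> continuous (at t within {0..}) u}"

definition is_solution ::
  "real \<Rightarrow> (real \<times> real \<Rightarrow> real) \<Rightarrow> (real \<Rightarrow> real) \<Rightarrow> real \<Rightarrow> real
     \<Rightarrow> (real \<Rightarrow> real) \<Rightarrow> (real \<Rightarrow> real) \<Rightarrow> bool" where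
  "is_solution \<gamma> \<beta> u x0 y0 x y \<longleftrightarrow>
     x 0 = x0 \<and> y 0 = y0 \<and>
     continuous_on {0..} x \<and> continuous_on {0..} y \<and>
     (\<forall>t\<ge>0. (x t, y t) \<in> simplexS) \<and>
     (\<forall>t\<in>{0..} - jump_times u.
        (x has_real_derivative (- (1 - u t) * \<gamma> * Rfun \<gamma> \<beta> (x t) (y t) * y t))
           (at t within {0..}) \<and>
        (y has_real_derivative (\<gamma> * ((1 - u t) * Rfun \<gamma> \<beta> (x t) (y t) - 1) * y t))
           (at t within {0..}))"

end

theory Submission
  imports Defs
begin

lemma mono_aux:
  fixes f f' :: "real \<Rightarrow> real"
  assumes "a \<le> b" "continuous_on {a..b} f" "finite S"
    "\<And>t. t \<in> {a<..<b} - S \<Longrightarrow> (f has_real_derivative f' t) (at t)"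
    "\<And>t. t \<in> {a<..<b} - S \<Longrightarrow> f' t \<ge> 0"
  shows "f a \<le> f b"
proof -
  define S' where "S' = insert a (insert b S)"
  define g where "g t = (if t \<in> S' then 0 else f' t)" for t
  have fin: "finite S'" using assms(3) by (simp add: S'_def)
  have "(g has_integral (f b - f a)) {a..b}"
  proof (rule fundamental_theorem_of_calculus_interior_strong[OF fin assms(1) _ assms(2)])
    fix x assume x: "x \<in> {a<..<b} - S'"
    then have "g x = f' x" by (simp add: g_def)
    then show "(f has_vector_derivative g x) (at x)"
      using assms(4)[of x] x by (simp add: S'_def has_real_derivative_iff_has_vector_derivative[symmetric])
  qed
  moreover have "\<forall>x\<in>{a..b}. 0 \<le> g x"
    using assms(5) by (auto simp: g_def S'_def)
  ultimately have "0 \<le> f b - f a" using has_integral_nonneg by blast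
  then show ?thesis by simp
qed

lemma within_to_at:
  assumes "(f has_real_derivative d) (at t within {0..})" "t > 0"
  shows "(f has_real_derivative d) (at t)"
proof -
  have "(f has_real_derivative d) (at t within {0<..})"
    by (rule has_field_derivative_subset[OF assms(1)]) auto
  then show ?thesis using at_within_open[of t "{0<..}"] assms(2) by simp
qed

theorem lemma7:
  fixes \<gamma> ybar x0 y0 :: real and \<beta> :: "real \<times> real \<Rightarrow> real"
    and u x y :: "real \<Rightarrow> real"
  assumes "\<gamma> > 0"
    and "C1_on_S \<beta>" and "\<forall>p\<in>simplexS. \<beta> p > 0"
    and "0 < ybar" and "ybar \<le> 1"
    and "(x0, y0) \<in> simplexS" and "0 < y0" and "y0 \<le> ybar"
    and "admissible u"
    and "is_solution \<gamma> \<beta> u x0 y0 x y"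
    and "\<forall>t\<ge>0. y t \<le> ybar"
    and "u integrable_on {0..}"
  shows "\<exists>tbar\<ge>0. Rfun \<gamma> \<beta> (x tbar) (y tbar) < 1"
proof (rule ccontr)
  assume "\<not> ?thesis"
  then have R1: "\<And>t. t \<ge> 0 \<Longrightarrow> Rfun \<gamma> \<beta> (x t) (y t) \<ge> 1" by force
  define R where "R t = Rfun \<gamma> \<beta> (x t) (y t)" for t
  have sol: "x 0 = x0" "y 0 = y0" "continuous_on {0..} x" "continuous_on {0..} y"
    "\<And>t. t \<ge> 0 \<Longrightarrow> (x t, y t) \<in> simplexS"
    "\<And>t. t \<in> {0..} - jump_times u \<Longrightarrow>
        (x has_real_derivative (- (1 - u t) * \<gamma> * R t * y t)) (at t within {0..})"
    "\<And>t. t \<in> {0..} - jump_times u \<Longrightarrow>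
        (y has_real_derivative (\<gamma> * ((1 - u t) * R t - 1) * y t)) (at t within {0..})"
    using assms(10) unfolding is_solution_def R_def by auto
  have xy: "0 \<le> x t" "0 \<le> y t" "x t + y t \<le> 1" if "t \<ge> 0" for t
    using sol(5)[OF that] by (auto simp: simplexS_def)
  have x0y0: "x0 + y0 \<le> 1" using assms(6) by (auto simp: simplexS_def)
  obtain D where D: "D \<subseteq> {0..}" "\<And>T. finite (D \<inter> {0..T})"
      "\<And>t. t\<in>{0..} - D \<Longrightarrow> continuous (at t within {0..}) u"
    and u01: "\<And>t. t \<ge> 0 \<Longrightarrow> 0 \<le> u t \<and> u t \<le> 1"
    using assms(9) unfolding admissible_def by blast
  have JD: "jump_times u \<subseteq> D" using D(3) by (auto simp: jump_times_def)
  have finJ: "finite (jump_times u \<inter> {0..T})" for T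
    using D(2)[of T] JD by (meson finite_subset inf_mono order_refl)
  define U where "U s = integral {0..s} u" for s
  have uint: "u integrable_on {0..b}" for b
    by (rule integrable_on_subinterval[OF assms(12)]) auto
  have dU: "(U has_real_derivative u t) (at t)" if "t > 0" "t \<notin> jump_times u" for t
  proof -
    have c: "continuous (at t within {0..}) u" using that by (auto simp: jump_times_def)
    have "continuous (at t within ({0..t+1} - {})) u"
      by (rule continuous_within_subset[OF c]) auto
    from integral_has_vector_derivative_continuous_at[OF uint _ _ this]
    have "(U has_vector_derivative u t) (at t within ({0..t+1} - {}))"
      using that unfolding U_def[abs_def] by simp
    then have "(U has_real_derivative u t) (at t within {0..t+1})"
      by (simp add: has_real_derivative_iff_has_vector_derivative)
    then have "(U has_real_derivative u t) (at t within {0<..<t+1})"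
      by (rule has_field_derivative_subset) auto
    then show ?thesis using at_within_open[of t "{0<..<t+1}"] that by simp
  qed
  define J where "J = integral {0..} u"
  have UJ: "U b \<le> J" if "b \<ge> 0" for b
    unfolding U_def J_def
    by (rule integral_subset_le) (use uint assms(12) u01 in auto)
  define c where "c = y0 * exp (- \<gamma> * J)"
  have cpos: "c > 0" using assms(7) by (simp add: c_def)
  have ylow: "y b \<ge> c" if "b \<ge> 0" for b
  proof -
    define g where "g s = y s * exp (\<gamma> * U s)" for s
    have "g 0 \<le> g b"
    proof (rule mono_aux[OF that _ finJ[of b], where f'="\<lambda>t. (\<gamma> * ((1 - u t) * R t - 1) * y t) * exp (\<gamma> * U t)
              + y t * (exp (\<gamma> * U t) * (\<gamma> * u t))"])
      show "continuous_on {0..b} g" unfolding g_def U_def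
        using continuous_on_subset[OF sol(4), of "{0..b}"] indefinite_integral_continuous_1[OF uint[of b]]
        by (auto intro!: continuous_intros)
    next
      fix t assume t0: "t \<in> {0<..<b} - jump_times u \<inter> {0..b}"
      then have t: "t \<in> {0<..<b} - jump_times u" by auto
      have dy: "(y has_real_derivative (\<gamma> * ((1 - u t) * R t - 1) * y t)) (at t)"
        using within_to_at[OF sol(7)] t by auto
      have dU': "(U has_real_derivative u t) (at t)" using dU t by auto
      show "(g has_real_derivative ((\<gamma> * ((1 - u t) * R t - 1) * y t) * exp (\<gamma> * U t)
              + y t * (exp (\<gamma> * U t) * (\<gamma> * u t)))) (at t)"
        unfolding g_def
        by (rule derivative_eq_intros dy dU' refl | simp)+
      have ut: "0 \<le> u t" "u t \<le> 1" using u01[of t] t by auto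
      have Rt: "R t \<ge> 1" using R1[of t] t by (auto simp: R_def)
      have "(1 - u t) * R t \<ge> (1 - u t) * 1" by (rule mult_left_mono) (use ut Rt in auto)
      then have k: "(1 - u t) * R t - 1 + u t \<ge> 0" by simp
      have eq: "(\<gamma> * ((1 - u t) * R t - 1) * y t) * exp (\<gamma> * U t)
              + y t * (exp (\<gamma> * U t) * (\<gamma> * u t))
             = (\<gamma> * y t * exp (\<gamma> * U t)) * ((1 - u t) * R t - 1 + u t)"
        by (simp add: algebra_simps)
      have "0 \<le> \<gamma> * y t * exp (\<gamma> * U t)" using assms(1) xy(2)[of t] t by auto
      then show "0 \<le> (\<gamma> * ((1 - u t) * R t - 1) * y t) * exp (\<gamma> * U t)
              + y t * (exp (\<gamma> * U t) * (\<gamma> * u t))"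
        unfolding eq using k by simp
    qed
    moreover have "g 0 = y0" by (simp add: g_def U_def sol(2))
    ultimately have "y0 \<le> y b * exp (\<gamma> * U b)" by (simp add: g_def)
    then have "y0 * exp (- \<gamma> * U b) \<le> y b"
      by (simp add: exp_minus field_simps)
    moreover have "exp (- \<gamma> * J) \<le> exp (- \<gamma> * U b)"
      using UJ[OF that] assms(1) by simp
    ultimately show ?thesis unfolding c_def using assms(7)
      by (meson mult_left_mono less_imp_le order_trans)
  qed
  have hb: "x b + y b + \<gamma> * c * b \<le> x0 + y0" if "b \<ge> 0" for b
  proof -
    define h where "h s = - (x s + y s + \<gamma> * c * s)" for s
    have "h 0 \<le> h b"
    proof (rule mono_aux[OF that _ finJ[of b], where f'="\<lambda>t. - ((- (1 - u t) * \<gamma> * R t * y t) +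
             (\<gamma> * ((1 - u t) * R t - 1) * y t) + \<gamma> * c)"])
      show "continuous_on {0..b} h" unfolding h_def
        using continuous_on_subset[OF sol(4), of "{0..b}"] continuous_on_subset[OF sol(3), of "{0..b}"]
        by (auto intro!: continuous_intros)
    next
      fix t assume t0: "t \<in> {0<..<b} - jump_times u \<inter> {0..b}"
      then have t: "t \<in> {0<..<b} - jump_times u" by auto
      have dy: "(y has_real_derivative (\<gamma> * ((1 - u t) * R t - 1) * y t)) (at t)"
        using within_to_at[OF sol(7)] t by auto
      have dx: "(x has_real_derivative (- (1 - u t) * \<gamma> * R t * y t)) (at t)"
        using within_to_at[OF sol(6)] t by auto
      show "(h has_real_derivative (- ((- (1 - u t) * \<gamma> * R t * y t) +
             (\<gamma> * ((1 - u t) * R t - 1) * y t) + \<gamma> * c))) (at t)"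
        unfolding h_def
        by (rule derivative_eq_intros dy dx refl | simp)+
      have "y t \<ge> c" using ylow[of t] t by auto
      then have "0 \<le> \<gamma> * (y t - c)" using assms(1) by simp
      then show "0 \<le> - ((- (1 - u t) * \<gamma> * R t * y t) +
             (\<gamma> * ((1 - u t) * R t - 1) * y t) + \<gamma> * c)"
        by (simp add: algebra_simps)
    qed
    then show ?thesis by (simp add: h_def sol(1,2))
  qed
  define b where "b = 2 / (\<gamma> * c)"
  have bpos: "b \<ge> 0" using assms(1) cpos by (simp add: b_def)
  have "\<gamma> * c * b = 2" using assms(1) cpos by (simp add: b_def)
  then show False using hb[OF bpos] xy[OF bpos] x0y0 by linarith
qed

end
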